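(* Let $\Lambda$ be the preprojective algebra of a simply-laced Dynkin graph $\Delta$ over an algebraically closed field $K$, with primitive idempotents $e_i$ ($i\in\Delta_0$). Let $\phi\in\mathrm{Aut}(\Lambda)$, and let $\rho^\phi$ be the permutation of $\Delta_0$ such that $\phi(e_i)=\lambda e_{\rho^\phi(i)}\lambda^{-1}$ for all $i\in\Delta_0$ for some unit $\lambda\in\Lambda^\times$. Then $\rho^\phi$ is a graph automorphism of $\Delta$.
   Context: For every $\phi\in\mathrm{Aut}(\Lambda)$ there exist a unit $\lambda\in\Lambda^\times$ and a unique permutation $\rho^\phi$ of $\Delta_0$ with $\phi(e_i)=\lambda e_{\rho^\phi(i)}\lambda^{-1}$ for all $i$; $\rho^\phi$ depends only on the class of $\phi$ in $\mathrm{Out}(\Lambda)=\mathrm{Aut}(\Lambda)/\mathrm{Inn}(\Lambda)$. *)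

theory Defs
  imports "HOL-Algebra.QuotRing"
begin

definition alg_closed :: "'k::field itself \<Rightarrow> bool" where
  "alg_closed _ \<longleftrightarrow> (\<forall>cs::'k list. length cs \<ge> 2 \<and> last cs \<noteq> 0 \<longrightarrow>
      (\<exists>x. (\<Sum>i<length cs. cs ! i * x ^ i) = 0))"

definition simple_graph :: "nat set \<Rightarrow> (nat \<Rightarrow> nat \<Rightarrow> bool) \<Rightarrow> bool" where
  "simple_graph V E \<longleftrightarrow> finite V \<and> (\<forall>i j. E i j \<longrightarrow> i \<in> V \<and> j \<in> V)
     \<and> (\<forall>i j. E i j \<longrightarrow> E j i) \<and> (\<forall>i. \<not> E i i)"

definition graph_iso :: "nat set \<Rightarrow> (nat \<Rightarrow> nat \<Rightarrow> bool) \<Rightarrow> nat set \<Rightarrow> (nat \<Rightarrow> nat \<Rightarrow> bool) \<Rightarrow> bool" where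
  "graph_iso V E W F \<longleftrightarrow> (\<exists>f. bij_betw f V W \<and> (\<forall>i\<in>V. \<forall>j\<in>V. E i j \<longleftrightarrow> F (f i) (f j)))"

definition line_edge :: "nat \<Rightarrow> nat \<Rightarrow> nat \<Rightarrow> bool" where
  "line_edge m i j \<longleftrightarrow> i < m \<and> j < m \<and> (j = i + 1 \<or> i = j + 1)"

definition dynkinA :: "nat \<Rightarrow> nat \<Rightarrow> nat \<Rightarrow> bool" where
  "dynkinA n = line_edge n"

definition dynkinD :: "nat \<Rightarrow> nat \<Rightarrow> nat \<Rightarrow> bool" where
  "dynkinD n i j \<longleftrightarrow> line_edge (n - 1) i j \<or> (i = n - 3 \<and> j = n - 1) \<or> (i = n - 1 \<and> j = n - 3)"

definition dynkinE :: "nat \<Rightarrow> nat \<Rightarrow> nat \<Rightarrow> bool" where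
  "dynkinE n i j \<longleftrightarrow> line_edge (n - 1) i j \<or> (i = 2 \<and> j = n - 1) \<or> (i = n - 1 \<and> j = 2)"

definition simply_laced_dynkin :: "nat set \<Rightarrow> (nat \<Rightarrow> nat \<Rightarrow> bool) \<Rightarrow> bool" where
  "simply_laced_dynkin V E \<longleftrightarrow> simple_graph V E \<and>
     ((\<exists>n\<ge>1. graph_iso V E {0..<n} (dynkinA n)) \<or>
      (\<exists>n\<ge>4. graph_iso V E {0..<n} (dynkinD n)) \<or>
      (\<exists>n\<in>{6,7,8}. graph_iso V E {0..<n} (dynkinE n)))"

definition graph_aut :: "nat set \<Rightarrow> (nat \<Rightarrow> nat \<Rightarrow> bool) \<Rightarrow> (nat \<Rightarrow> nat) \<Rightarrow> bool" where
  "graph_aut V E \<rho> \<longleftrightarrow> bij_betw \<rho> V V \<and> (\<forall>i\<in>V. \<forall>j\<in>V. E i j \<longleftrightarrow> E (\<rho> i) (\<rho> j))"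

text \<open>The double quiver of a simple graph has arrows i -> j and j -> i for each edge {i,j}.
  A path is a nonempty list of vertices, consecutive ones adjacent; [i] is the trivial path e_i.
  Paths p and q compose (p then q) when last p = hd q, giving p @ tl q.\<close>

definition valid_path :: "nat set \<Rightarrow> (nat \<Rightarrow> nat \<Rightarrow> bool) \<Rightarrow> nat list \<Rightarrow> bool" where
  "valid_path V E p \<longleftrightarrow> p \<noteq> [] \<and> set p \<subseteq> V \<and> (\<forall>k. Suc k < length p \<longrightarrow> E (p ! k) (p ! Suc k))"

definition path_algebra :: "nat set \<Rightarrow> (nat \<Rightarrow> nat \<Rightarrow> bool) \<Rightarrow> (nat list \<Rightarrow> 'k::field) ring" where
  "path_algebra V E = \<lparr>
     carrier = {x. (\<forall>p. x p \<noteq> 0 \<longrightarrow> valid_path V E p) \<and> finite {p. x p \<noteq> 0}},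
     mult = (\<lambda>x y r. if valid_path V E r
                      then (\<Sum>k<length r. x (take (Suc k) r) * y (drop k r)) else 0),
     one = (\<lambda>p. if length p = 1 \<and> hd p \<in> V then 1 else 0),
     zero = (\<lambda>p. 0),
     add = (\<lambda>x y p. x p + y p) \<rparr>"

definition pa_scalar :: "nat set \<Rightarrow> (nat \<Rightarrow> nat \<Rightarrow> bool) \<Rightarrow> 'k::field \<Rightarrow> nat list \<Rightarrow> 'k" where
  "pa_scalar V E c = (\<lambda>p. c * one (path_algebra V E :: (nat list \<Rightarrow> 'k) ring) p)"

definition triv_path :: "nat \<Rightarrow> nat list \<Rightarrow> 'k::field" where
  "triv_path i = (\<lambda>p. if p = [i] then 1 else 0)"

text \<open>Preprojective relation at vertex i, w.r.t. the orientation i -> j whenever i < j: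
  sum over neighbours j of sign(i,j) * (i -> j -> i), i.e. the e_i-component of
  sum over arrows a of (a a^* - a^* a).\<close>
definition preproj_rel :: "nat set \<Rightarrow> (nat \<Rightarrow> nat \<Rightarrow> bool) \<Rightarrow> nat \<Rightarrow> nat list \<Rightarrow> 'k::field" where
  "preproj_rel V E i = (\<lambda>p. if (\<exists>j\<in>V. E i j \<and> p = [i, j, i])
       then (if i < p ! 1 then 1 else -1) else 0)"

definition preproj_ideal :: "nat set \<Rightarrow> (nat \<Rightarrow> nat \<Rightarrow> bool) \<Rightarrow> (nat list \<Rightarrow> 'k::field) set" where
  "preproj_ideal V E = genideal (path_algebra V E) (preproj_rel V E ` V)"

definition preproj_algebra :: "nat set \<Rightarrow> (nat \<Rightarrow> nat \<Rightarrow> bool) \<Rightarrow> (nat list \<Rightarrow> 'k::field) set ring" where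
  "preproj_algebra V E = path_algebra V E Quot preproj_ideal V E"

definition pp_class :: "nat set \<Rightarrow> (nat \<Rightarrow> nat \<Rightarrow> bool) \<Rightarrow> (nat list \<Rightarrow> 'k::field) \<Rightarrow> (nat list \<Rightarrow> 'k) set" where
  "pp_class V E x = preproj_ideal V E +>\<^bsub>path_algebra V E\<^esub> x"

text \<open>K-algebra automorphisms: ring automorphisms fixing the scalars K * 1.\<close>
definition preproj_aut :: "nat set \<Rightarrow> (nat \<Rightarrow> nat \<Rightarrow> bool) \<Rightarrow>
    ((nat list \<Rightarrow> 'k::field) set \<Rightarrow> (nat list \<Rightarrow> 'k) set) set" where
  "preproj_aut V E = {\<phi>. \<phi> \<in> ring_iso (preproj_algebra V E) (preproj_algebra V E) \<and>
      (\<forall>c::'k. \<phi> (pp_class V E (pa_scalar V E c)) = pp_class V E (pa_scalar V E c))}"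

end

theory Submission
  imports Defs
begin


lemma tri_reindex:
  "(\<Sum>k<n. \<Sum>m<Suc k. f m k) = (\<Sum>m<n. \<Sum>l<n-m. (f m (m+l) :: 'a::comm_monoid_add))"
proof (induction n)
  case 0 then show ?case by simp
next
  case (Suc n)
  have "(\<Sum>m<Suc n. \<Sum>l<Suc n-m. f m (m+l)) = (\<Sum>m<Suc n. (\<Sum>l<n-m. f m (m+l)) + f m n)"
  proof (rule sum.cong[OF refl])
    fix m assume "m \<in> {..<Suc n}"
    then have "Suc n - m = Suc (n - m)" "m + (n - m) = n" by auto
    then show "(\<Sum>l<Suc n-m. f m (m+l)) = (\<Sum>l<n-m. f m (m+l)) + f m n"
      by simp
  qed
  also have "\<dots> = (\<Sum>m<n. \<Sum>l<n-m. f m (m+l)) + (\<Sum>m<Suc n. f m n)"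
    by (simp add: sum.distrib)
  finally show ?case using Suc by simp
qed

lemma vp_take: "valid_path V E p \<Longrightarrow> 0 < k \<Longrightarrow> valid_path V E (take k p)"
  unfolding valid_path_def
  by (auto dest: in_set_takeD)

lemma vp_drop: "valid_path V E p \<Longrightarrow> k < length p \<Longrightarrow> valid_path V E (drop k p)"
  unfolding valid_path_def
  by (auto dest: in_set_dropD)



lemma pa_mult: "mult (path_algebra V E) x y = (\<lambda>r. if valid_path V E r
                      then (\<Sum>k<length r. x (take (Suc k) r) * y (drop k r)) else (0::'k::field))"
  by (simp add: path_algebra_def)
lemma pa_add: "add (path_algebra V E) x y = (\<lambda>p. x p + (y p::'k::field))"
  by (simp add: path_algebra_def)
lemma pa_zero: "zero (path_algebra V E) = (\<lambda>p. 0::'k::field)"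
  by (simp add: path_algebra_def)
lemma pa_one: "one (path_algebra V E) = (\<lambda>p. if length p = 1 \<and> hd p \<in> V then 1 else 0::'k::field)"
  by (simp add: path_algebra_def)
lemma pa_carrier: "carrier (path_algebra V E) = {x::nat list \<Rightarrow> 'k::field. (\<forall>p. x p \<noteq> 0 \<longrightarrow> valid_path V E p) \<and> finite {p. x p \<noteq> 0}}"
  by (simp add: path_algebra_def)

lemma pa_assoc:
  "mult (path_algebra V E) (mult (path_algebra V E) x y) z =
   mult (path_algebra V E) x (mult (path_algebra V E) y (z :: nat list \<Rightarrow> 'k::field))"
proof
  fix r
  show "mult (path_algebra V E) (mult (path_algebra V E) x y) z r =
   mult (path_algebra V E) x (mult (path_algebra V E) y z) r"
  proof (cases "valid_path V E r")
    case False then show ?thesis by (simp add: pa_mult)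
  next
    case True
    define n where "n = length r"
    define f where "f m k = x (take (Suc m) r) * y (drop m (take (Suc k) r)) * z (drop k r)" for m k
    have L: "mult (path_algebra V E) (mult (path_algebra V E) x y) z r = (\<Sum>k<n. \<Sum>m<Suc k. f m k)"
    proof -
      have "mult (path_algebra V E) (mult (path_algebra V E) x y) z r =
        (\<Sum>k<n. (\<Sum>m<Suc k. x (take (Suc m) (take (Suc k) r)) * y (drop m (take (Suc k) r))) * z (drop k r))"
        using True by (auto simp: pa_mult n_def vp_take intro!: sum.cong)
      also have "\<dots> = (\<Sum>k<n. \<Sum>m<Suc k. f m k)"
        unfolding f_def by (intro sum.cong refl) (simp add: sum_distrib_right min_def del: sum.lessThan_Suc)
      finally show ?thesis .
    qed
    have R: "mult (path_algebra V E) x (mult (path_algebra V E) y z) r = (\<Sum>m<n. \<Sum>l<n-m. f m (m+l))"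
    proof -
      have "mult (path_algebra V E) x (mult (path_algebra V E) y z) r =
        (\<Sum>m<n. x (take (Suc m) r) * (\<Sum>l<n-m. y (take (Suc l) (drop m r)) * z (drop l (drop m r))))"
        using True by (auto simp: pa_mult n_def vp_drop intro!: sum.cong)
      also have "\<dots> = (\<Sum>m<n. \<Sum>l<n-m. f m (m+l))"
        unfolding f_def by (intro sum.cong refl) (simp add: sum_distrib_left take_drop drop_drop add.commute mult.assoc)
      finally show ?thesis .
    qed
    show ?thesis using L R tri_reindex[of f n] by simp
  qed
qed



lemma pa_mult_closed:
  assumes "x \<in> carrier (path_algebra V E)" "y \<in> carrier (path_algebra V E)"
  shows "mult (path_algebra V E) x y \<in> carrier (path_algebra V E :: (nat list \<Rightarrow> 'k::field) ring)"
proof -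
  let ?m = "mult (path_algebra V E) x y"
  have fx: "finite {p. x p \<noteq> 0}" and fy: "finite {p. y p \<noteq> 0}" using assms by (auto simp: pa_carrier)
  have "{r. ?m r \<noteq> 0} \<subseteq> (\<lambda>(p,q). p @ tl q) ` ({p. x p \<noteq> 0} \<times> {q. y q \<noteq> 0})"
  proof
    fix r assume "r \<in> {r. ?m r \<noteq> 0}"
    then have v: "valid_path V E r" and s: "(\<Sum>k<length r. x (take (Suc k) r) * y (drop k r)) \<noteq> 0"
      by (auto simp: pa_mult split: if_splits)
    from sum.not_neutral_contains_not_neutral[OF s] obtain k where k: "k < length r"
      "x (take (Suc k) r) * y (drop k r) \<noteq> 0" by auto
    have "r = take (Suc k) r @ tl (drop k r)"
      by (metis append_take_drop_id drop_Suc tl_drop)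
    then show "r \<in> (\<lambda>(p,q). p @ tl q) ` ({p. x p \<noteq> 0} \<times> {q. y q \<noteq> 0})"
      using k by (intro image_eqI[where x="(take (Suc k) r, drop k r)"]) auto
  qed
  then have "finite {r. ?m r \<noteq> 0}" using fx fy by (meson finite_SigmaI finite_imageI finite_subset)
  then show ?thesis by (auto simp: pa_carrier pa_mult)
qed

lemma pa_one_closed:
  assumes "finite V"
  shows "one (path_algebra V E) \<in> carrier (path_algebra V E :: (nat list \<Rightarrow> 'k::field) ring)"
proof -
  have "{p. one (path_algebra V E) p \<noteq> (0::'k)} \<subseteq> (\<lambda>i. [i]) ` V"
    by (auto simp: pa_one length_Suc_conv)
  then have "finite {p. one (path_algebra V E) p \<noteq> (0::'k)}"
    using assms finite_subset by blast
  moreover have "valid_path V E p" if "one (path_algebra V E) p \<noteq> (0::'k)" for p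
    using that by (auto simp: pa_one valid_path_def length_Suc_conv split: if_splits)
  ultimately show ?thesis by (auto simp: pa_carrier)
qed

lemma pa_l_one:
  assumes "x \<in> carrier (path_algebra V E :: (nat list \<Rightarrow> 'k::field) ring)"
  shows "mult (path_algebra V E) (one (path_algebra V E)) x = x"
proof
  fix r
  show "mult (path_algebra V E) (one (path_algebra V E)) x r = x r"
  proof (cases "valid_path V E r")
    case False then show ?thesis using assms by (auto simp: pa_mult pa_carrier)
  next
    case True
    then have ne: "r \<noteq> []" and hv: "hd r \<in> V" by (auto simp: valid_path_def hd_in_set subset_iff)
    have "(\<Sum>k<length r. one (path_algebra V E) (take (Suc k) r) * x (drop k r)) =
          (\<Sum>k<length r. if k = 0 then x r else 0)"
      using ne hv by (intro sum.cong refl) (auto simp: pa_one min_def hd_take)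
    also have "\<dots> = x r" using ne by (simp add: sum.delta')
    finally show ?thesis using True by (simp add: pa_mult)
  qed
qed

lemma pa_r_one:
  assumes "x \<in> carrier (path_algebra V E :: (nat list \<Rightarrow> 'k::field) ring)"
  shows "mult (path_algebra V E) x (one (path_algebra V E)) = x"
proof
  fix r
  show "mult (path_algebra V E) x (one (path_algebra V E)) r = x r"
  proof (cases "valid_path V E r")
    case False then show ?thesis using assms by (auto simp: pa_mult pa_carrier)
  next
    case True
    then have ne: "r \<noteq> []" and sv: "set r \<subseteq> V" by (auto simp: valid_path_def)
    have "(\<Sum>k<length r. x (take (Suc k) r) * one (path_algebra V E) (drop k r)) =
          (\<Sum>k<length r. if k = length r - 1 then x r else 0)"
    proof (intro sum.cong refl)
      fix k assume k: "k \<in> {..<length r}"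
      then have "hd (drop k r) \<in> V" using sv by (simp add: hd_drop_conv_nth subset_iff)
      then show "x (take (Suc k) r) * one (path_algebra V E) (drop k r) = (if k = length r - 1 then x r else 0)"
        using k by (auto simp: pa_one)
    qed
    also have "\<dots> = x r" using ne by (simp add: sum.delta')
    finally show ?thesis using True by (simp add: pa_mult)
  qed
qed

lemma pa_add_closed:
  assumes "x \<in> carrier (path_algebra V E)" "y \<in> carrier (path_algebra V E)"
  shows "add (path_algebra V E) x y \<in> carrier (path_algebra V E :: (nat list \<Rightarrow> 'k::field) ring)"
proof -
  have "{p. x p + y p \<noteq> 0} \<subseteq> {p. x p \<noteq> 0} \<union> {p. y p \<noteq> 0}" by auto
  then show ?thesis using assms by (auto simp: pa_carrier pa_add intro: finite_subset)
qed

lemma pa_ring: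
  assumes "finite V"
  shows "ring (path_algebra V E :: (nat list \<Rightarrow> 'k::field) ring)"
proof (rule ringI)
  show "abelian_group (path_algebra V E :: (nat list \<Rightarrow> 'k::field) ring)"
  proof (rule abelian_groupI)
    fix x assume x: "x \<in> carrier (path_algebra V E :: (nat list \<Rightarrow> 'k::field) ring)"
    show "\<exists>y\<in>carrier (path_algebra V E). add (path_algebra V E) y x = zero (path_algebra V E)"
      using x by (intro bexI[where x="\<lambda>p. - x p"]) (auto simp: pa_carrier pa_add pa_zero)
  next
    fix x y :: "nat list \<Rightarrow> 'k" assume "x \<in> carrier (path_algebra V E)" "y \<in> carrier (path_algebra V E)"
    then show "add (path_algebra V E) x y \<in> carrier (path_algebra V E)" by (rule pa_add_closed)
  qed (auto simp: pa_add pa_zero pa_carrier ac_simps)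
  show "monoid (path_algebra V E :: (nat list \<Rightarrow> 'k::field) ring)"
    by (rule monoidI) (auto simp: pa_mult_closed pa_one_closed assms pa_assoc pa_l_one pa_r_one)
next
  fix x y z :: "nat list \<Rightarrow> 'k"
  show "mult (path_algebra V E) (add (path_algebra V E) x y) z = add (path_algebra V E) (mult (path_algebra V E) x z) (mult (path_algebra V E) y z)"
    by (auto simp: pa_mult pa_add distrib_right sum.distrib)
  show "mult (path_algebra V E) z (add (path_algebra V E) x y) = add (path_algebra V E) (mult (path_algebra V E) z x) (mult (path_algebra V E) z y)"
    by (auto simp: pa_mult pa_add distrib_left sum.distrib)
qed



definition delta :: "nat list \<Rightarrow> nat list \<Rightarrow> 'k::field" where
  "delta p = (\<lambda>r. if r = p then 1 else 0)"

definition lowvan :: "nat \<Rightarrow> (nat list \<Rightarrow> 'k::field) \<Rightarrow> bool" where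
  "lowvan n x \<longleftrightarrow> (\<forall>p. length p \<le> n \<longrightarrow> x p = 0)"

lemma triv_delta: "triv_path i = delta [i]"
  by (simp add: triv_path_def delta_def)

lemma delta_carrier: "valid_path V E p \<Longrightarrow> (delta p :: nat list \<Rightarrow> 'k::field) \<in> carrier (path_algebra V E)"
  by (auto simp: pa_carrier delta_def)

lemma vp_ne: "valid_path V E r \<Longrightarrow> r \<noteq> []" by (simp add: valid_path_def)

lemma delta_left:
  assumes "y \<in> carrier (path_algebra V E :: (nat list \<Rightarrow> 'k::field) ring)"
  shows "mult (path_algebra V E) (delta [a]) y = (\<lambda>r. if hd r = a then y r else 0)"
proof
  fix r
  show "mult (path_algebra V E) (delta [a]) y r = (if hd r = a then y r else 0)"
  proof (cases "valid_path V E r")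
    case False then show ?thesis using assms by (auto simp: pa_mult pa_carrier)
  next
    case True
    then have ne: "r \<noteq> []" by (rule vp_ne)
    have "(\<Sum>k<length r. delta [a] (take (Suc k) r) * y (drop k r)) =
          (\<Sum>k<length r. if k = 0 then (if hd r = a then y r else 0) else 0)"
    proof (intro sum.cong refl)
      fix k assume "k \<in> {..<length r}"
      then show "delta [a] (take (Suc k) r) * y (drop k r) = (if k = 0 then (if hd r = a then y r else 0) else 0)"
        using ne by (cases r) (auto simp: delta_def take_Suc_conv_app_nth)
    qed
    also have "\<dots> = (if hd r = a then y r else 0)" using ne by (simp add: sum.delta')
    finally show ?thesis using True by (simp add: pa_mult)
  qed
qed

lemma drop_len_minus1: "a \<noteq> [] \<Longrightarrow> drop (length a - 1) a = [last a]"
proof -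
  assume "a \<noteq> []"
  then obtain xs y where "a = xs @ [y]" by (metis rev_exhaust)
  then show ?thesis by simp
qed

lemma delta_right:
  assumes "y \<in> carrier (path_algebra V E :: (nat list \<Rightarrow> 'k::field) ring)"
  shows "mult (path_algebra V E) y (delta [a]) = (\<lambda>r. if last r = a then y r else 0)"
proof
  fix r
  show "mult (path_algebra V E) y (delta [a]) r = (if last r = a then y r else 0)"
  proof (cases "valid_path V E r")
    case False then show ?thesis using assms by (auto simp: pa_mult pa_carrier)
  next
    case True
    then have ne: "r \<noteq> []" by (rule vp_ne)
    have "(\<Sum>k<length r. y (take (Suc k) r) * delta [a] (drop k r)) =
          (\<Sum>k<length r. if k = length r - 1 then (if last r = a then y r else 0) else 0)"
    proof (intro sum.cong refl)
      fix k assume k: "k \<in> {..<length r}"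
      have "drop k r = [a] \<longleftrightarrow> k = length r - 1 \<and> last r = a"
      proof
        assume d: "drop k r = [a]"
        then have "length (drop k r) = 1" by simp
        then have "k = length r - 1" by simp
        moreover have "last r = a" using d k last_drop[of k r] by simp
        ultimately show "k = length r - 1 \<and> last r = a" by simp
      next
        assume "k = length r - 1 \<and> last r = a"
        then show "drop k r = [a]" using ne drop_len_minus1[of r] by simp
      qed
      then show "y (take (Suc k) r) * delta [a] (drop k r) = (if k = length r - 1 then (if last r = a then y r else 0) else 0)"
        using ne k by (auto simp: delta_def)
    qed
    also have "\<dots> = (if last r = a then y r else 0)" using ne by (simp add: sum.delta')
    finally show ?thesis using True by (simp add: pa_mult)
  qed
qed

lemma scalar_left:
  assumes "y \<in> carrier (path_algebra V E :: (nat list \<Rightarrow> 'k::field) ring)"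
  shows "mult (path_algebra V E) (pa_scalar V E c) y = (\<lambda>r. c * y r)"
proof
  fix r
  show "mult (path_algebra V E) (pa_scalar V E c) y r = c * y r"
  proof (cases "valid_path V E r")
    case False then show ?thesis using assms by (auto simp: pa_mult pa_carrier)
  next
    case True
    then have ne: "r \<noteq> []" and hv: "hd r \<in> V" by (auto simp: valid_path_def hd_in_set subset_iff)
    have "(\<Sum>k<length r. pa_scalar V E c (take (Suc k) r) * y (drop k r)) =
          (\<Sum>k<length r. if k = 0 then c * y r else 0)"
      using ne hv by (intro sum.cong refl) (auto simp: pa_scalar_def pa_one min_def hd_take)
    also have "\<dots> = c * y r" using ne by (simp add: sum.delta')
    finally show ?thesis using True by (simp add: pa_mult)
  qed
qed

lemma scalar_carrier: "finite V \<Longrightarrow> pa_scalar V E c \<in> carrier (path_algebra V E :: (nat list \<Rightarrow> 'k::field) ring)"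
  using pa_one_closed[of V E] by (auto simp: pa_scalar_def pa_carrier)


lemma delta_mult:
  assumes v: "valid_path V E (a @ tl b)" and a: "a \<noteq> []" and b: "b \<noteq> []" and ab: "last a = hd b"
  shows "mult (path_algebra V E) (delta a) (delta b) = (delta (a @ tl b) :: nat list \<Rightarrow> 'k::field)"
proof
  fix r
  show "mult (path_algebra V E) (delta a) (delta b) r = (delta (a @ tl b) r :: 'k)"
  proof (cases "valid_path V E r")
    case False
    then have "r \<noteq> a @ tl b" using v by auto
    then show ?thesis using False by (simp add: pa_mult delta_def)
  next
    case True
    have "(\<Sum>k<length r. delta a (take (Suc k) r) * delta b (drop k r)) =
          (\<Sum>k<length r. if k = length a - 1 then (if r = a @ tl b then 1 else 0) else (0::'k))"
    proof (intro sum.cong refl)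
      fix k assume k: "k \<in> {..<length r}"
      have "take (Suc k) r = a \<and> drop k r = b \<longleftrightarrow> k = length a - 1 \<and> r = a @ tl b"
      proof
        assume h: "take (Suc k) r = a \<and> drop k r = b"
        have "length (take (Suc k) r) = Suc k" using k by simp
        then have "length a = Suc k" using h by simp
        moreover have "drop (Suc k) r = tl (drop k r)" by (simp add: drop_Suc tl_drop)
        then have "r = a @ tl b" using h append_take_drop_id[of "Suc k" r] by simp
        ultimately show "k = length a - 1 \<and> r = a @ tl b" by simp
      next
        assume h: "k = length a - 1 \<and> r = a @ tl b"
        then have "Suc k = length a" using a by simp
        then have t: "take (Suc k) r = a" using h by simp
        have "drop k r = drop k a @ tl b" using h a by simp
        also have "\<dots> = [last a] @ tl b" using h a drop_len_minus1[of a] by simp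
        also have "\<dots> = b" using ab b by simp
        finally show "take (Suc k) r = a \<and> drop k r = b" using t by simp
      qed
      moreover have "delta a (take (Suc k) r) * delta b (drop k r) =
          (if take (Suc k) r = a \<and> drop k r = b then 1 else (0::'k))"
        by (simp add: delta_def)
      ultimately show "delta a (take (Suc k) r) * delta b (drop k r) =
          (if k = length a - 1 then (if r = a @ tl b then 1 else 0) else (0::'k))"
        by simp
    qed
    also have "\<dots> = delta (a @ tl b) r"
    proof (cases "r = a @ tl b")
      case True
      then have "length a - 1 < length r" using a by (cases a) auto
      then show ?thesis using True by (simp add: sum.delta' delta_def)
    qed (simp add: delta_def)
    finally show ?thesis using True by (simp add: pa_mult)
  qed
qed

lemma lowvan_mult_left:
  assumes "lowvan n x"
  shows "lowvan n (mult (path_algebra V E) x (y :: nat list \<Rightarrow> 'k::field))"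
  unfolding lowvan_def
proof (intro allI impI)
  fix p :: "nat list" assume "length p \<le> n"
  then have "\<forall>k<length p. x (take (Suc k) p) = 0" using assms by (auto simp: lowvan_def)
  then show "mult (path_algebra V E) x y p = 0" by (simp add: pa_mult)
qed

lemma lowvan_mult_right:
  assumes "lowvan n y"
  shows "lowvan n (mult (path_algebra V E) (x :: nat list \<Rightarrow> 'k::field) y)"
  unfolding lowvan_def
proof (intro allI impI)
  fix p :: "nat list" assume "length p \<le> n"
  then have "\<forall>k<length p. y (drop k p) = 0" using assms by (auto simp: lowvan_def)
  then show "mult (path_algebra V E) x y p = 0" by (simp add: pa_mult)
qed

lemma lowvan_mult_12:
  assumes "lowvan 1 x" "lowvan 1 y"
  shows "lowvan 2 (mult (path_algebra V E) (x :: nat list \<Rightarrow> 'k::field) y)"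
  unfolding lowvan_def
proof (intro allI impI)
  fix p :: "nat list" assume l: "length p \<le> 2"
  have "\<forall>k<length p. x (take (Suc k) p) * y (drop k p) = 0"
  proof (intro allI impI)
    fix k assume "k < length p"
    then have "length (take (Suc k) p) \<le> 1 \<or> length (drop k p) \<le> 1" using l by auto
    then show "x (take (Suc k) p) * y (drop k p) = 0" using assms by (auto simp: lowvan_def)
  qed
  then show "mult (path_algebra V E) x y p = 0" by (simp add: pa_mult del: mult_eq_0_iff)
qed

lemma lowvan_add: "lowvan n x \<Longrightarrow> lowvan n y \<Longrightarrow> lowvan n (add (path_algebra V E) x (y :: nat list \<Rightarrow> 'k::field))"
  by (simp add: lowvan_def pa_add)

lemma pa_minus:
  assumes "finite V" "x \<in> carrier (path_algebra V E :: (nat list \<Rightarrow> 'k::field) ring)"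
  shows "a_inv (path_algebra V E) x = (\<lambda>p. - x p)"
proof -
  interpret ring "path_algebra V E :: (nat list \<Rightarrow> 'k::field) ring" by (rule pa_ring[OF assms(1)])
  show ?thesis
    by (rule minus_equality) (use assms in \<open>auto simp: pa_add pa_zero pa_carrier\<close>)
qed

lemma Jset_ideal:
  assumes "finite V"
  shows "ideal {x \<in> carrier (path_algebra V E :: (nat list \<Rightarrow> 'k::field) ring). lowvan n x} (path_algebra V E)"
proof (rule idealI)
  show "ring (path_algebra V E :: (nat list \<Rightarrow> 'k::field) ring)" by (rule pa_ring[OF assms])
  show "subgroup {x \<in> carrier (path_algebra V E :: (nat list \<Rightarrow> 'k::field) ring). lowvan n x} (add_monoid (path_algebra V E))"
  proof
    show "{x \<in> carrier (path_algebra V E :: (nat list \<Rightarrow> 'k::field) ring). lowvan n x} \<subseteq> carrier (add_monoid (path_algebra V E))" by auto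
  next
    fix x y :: "nat list \<Rightarrow> 'k"
    assume "x \<in> {x \<in> carrier (path_algebra V E). lowvan n x}" "y \<in> {x \<in> carrier (path_algebra V E). lowvan n x}"
    then show "x \<otimes>\<^bsub>add_monoid (path_algebra V E)\<^esub> y \<in> {x \<in> carrier (path_algebra V E). lowvan n x}"
      by (auto simp: pa_add_closed lowvan_add)
  next
    show "\<one>\<^bsub>add_monoid (path_algebra V E)\<^esub> \<in> {x \<in> carrier (path_algebra V E :: (nat list \<Rightarrow> 'k::field) ring). lowvan n x}"
      by (auto simp: pa_zero pa_carrier lowvan_def)
  next
    fix x :: "nat list \<Rightarrow> 'k"
    assume x: "x \<in> {x \<in> carrier (path_algebra V E). lowvan n x}"
    then have "inv\<^bsub>add_monoid (path_algebra V E)\<^esub> x = (\<lambda>p. - x p)"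
      using pa_minus[OF assms, of x E] by (simp add: a_inv_def)
    then show "inv\<^bsub>add_monoid (path_algebra V E)\<^esub> x \<in> {x \<in> carrier (path_algebra V E). lowvan n x}"
      using x by (auto simp: pa_carrier lowvan_def)
  qed
next
  fix a x :: "nat list \<Rightarrow> 'k"
  assume "a \<in> {x \<in> carrier (path_algebra V E). lowvan n x}" "x \<in> carrier (path_algebra V E)"
  then show "x \<otimes>\<^bsub>path_algebra V E\<^esub> a \<in> {x \<in> carrier (path_algebra V E). lowvan n x}"
       "a \<otimes>\<^bsub>path_algebra V E\<^esub> x \<in> {x \<in> carrier (path_algebra V E). lowvan n x}"
    by (auto simp: pa_mult_closed lowvan_mult_left lowvan_mult_right)
qed



context
  fixes V :: "nat set" and E :: "nat \<Rightarrow> nat \<Rightarrow> bool"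
  assumes sg: "simple_graph V E"
begin

lemma finV: "finite V" using sg by (simp add: simple_graph_def)

lemma rel_in:
  assumes i: "i \<in> V"
  shows "(preproj_rel V E i :: nat list \<Rightarrow> 'k::field) \<in> {x \<in> carrier (path_algebra V E). lowvan 2 x}"
proof -
  have sup: "{p. (preproj_rel V E i p :: 'k) \<noteq> 0} \<subseteq> (\<lambda>j. [i,j,i]) ` V"
    by (auto simp: preproj_rel_def split: if_splits)
  have "valid_path V E p" if "(preproj_rel V E i p :: 'k) \<noteq> 0" for p
  proof -
    from that obtain j where j: "j \<in> V" "E i j" "p = [i,j,i]"
      by (auto simp: preproj_rel_def split: if_splits)
    then have "E j i" using sg by (simp add: simple_graph_def)
    then show ?thesis using j i by (auto simp: valid_path_def less_Suc_eq nth_Cons')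
  qed
  moreover have "finite {p. (preproj_rel V E i p :: 'k) \<noteq> 0}"
    using sup finV finite_subset by blast
  moreover have "lowvan 2 (preproj_rel V E i :: nat list \<Rightarrow> 'k)"
    by (auto simp: lowvan_def preproj_rel_def)
  ultimately show ?thesis by (auto simp: pa_carrier)
qed

lemma I_ideal: "ideal (preproj_ideal V E :: (nat list \<Rightarrow> 'k::field) set) (path_algebra V E)"
proof -
  interpret ring "path_algebra V E :: (nat list \<Rightarrow> 'k::field) ring" by (rule pa_ring[OF finV])
  have "(preproj_rel V E ` V :: (nat list \<Rightarrow> 'k) set) \<subseteq> carrier (path_algebra V E)"
    using rel_in by blast
  then show ?thesis unfolding preproj_ideal_def by (rule genideal_ideal)
qed

lemma I_sub: "(preproj_ideal V E :: (nat list \<Rightarrow> 'k::field) set) \<subseteq> {x \<in> carrier (path_algebra V E). lowvan 2 x}"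
proof -
  interpret ring "path_algebra V E :: (nat list \<Rightarrow> 'k::field) ring" by (rule pa_ring[OF finV])
  have "(preproj_rel V E ` V :: (nat list \<Rightarrow> 'k) set) \<subseteq> {x \<in> carrier (path_algebra V E). lowvan 2 x}"
    using rel_in by blast
  then show ?thesis unfolding preproj_ideal_def by (rule genideal_minimal[OF Jset_ideal[OF finV]])
qed

lemma L_ring: "ring (preproj_algebra V E :: (nat list \<Rightarrow> 'k::field) set ring)"
  unfolding preproj_algebra_def by (rule ideal.quotient_is_ring[OF I_ideal])

lemma pi_hom: "(pp_class V E :: (nat list \<Rightarrow> 'k::field) \<Rightarrow> _) \<in> ring_hom (path_algebra V E) (preproj_algebra V E)"
proof -
  have "pp_class V E = (a_r_coset (path_algebra V E) (preproj_ideal V E) :: (nat list \<Rightarrow> 'k::field) \<Rightarrow> _)"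
    by (rule ext) (simp add: pp_class_def)
  then show ?thesis unfolding preproj_algebra_def using ideal.rcos_ring_hom[OF I_ideal] by simp
qed

lemma L_carrier: "carrier (preproj_algebra V E :: (nat list \<Rightarrow> 'k::field) set ring) = pp_class V E ` carrier (path_algebra V E)"
  unfolding preproj_algebra_def FactRing_def A_RCOSETS_def' pp_class_def by auto

lemma mem2:
  assumes x: "x \<in> carrier (path_algebra V E :: (nat list \<Rightarrow> 'k::field) ring)"
    and y: "y \<in> {x \<in> carrier (path_algebra V E). lowvan 2 x}"
    and eq: "pp_class V E x = pp_class V E y"
  shows "lowvan 2 x"
proof -
  interpret ideal "preproj_ideal V E :: (nat list \<Rightarrow> 'k::field) set" "path_algebra V E" by (rule I_ideal)
  have "x \<in> preproj_ideal V E +>\<^bsub>path_algebra V E\<^esub> x" using x by (rule a_rcos_self)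
  then have "x \<in> preproj_ideal V E +>\<^bsub>path_algebra V E\<^esub> y" using eq by (simp add: pp_class_def)
  then obtain h where h: "h \<in> preproj_ideal V E" "x = add (path_algebra V E) h y"
    unfolding a_r_coset_def' by auto
  have "lowvan 2 h" using h(1) I_sub by blast
  then show ?thesis using h(2) y lowvan_add by auto
qed

end


definition Jh :: "nat set \<Rightarrow> (nat \<Rightarrow> nat \<Rightarrow> bool) \<Rightarrow> nat \<Rightarrow> (nat list \<Rightarrow> 'k::field) set set" where
  "Jh V E n = pp_class V E ` {x \<in> carrier (path_algebra V E). lowvan n x}"

context
  fixes V :: "nat set" and E :: "nat \<Rightarrow> nat \<Rightarrow> bool"
  assumes sg: "simple_graph V E"
begin

lemma Jh_carrier: "Jh V E n \<subseteq> (carrier (preproj_algebra V E) :: (nat list \<Rightarrow> 'k::field) set set)"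
  unfolding Jh_def L_carrier[OF sg] by auto

lemma Jh_mult_l:
  assumes a: "a \<in> Jh V E n" and b: "b \<in> carrier (preproj_algebra V E :: (nat list \<Rightarrow> 'k::field) set ring)"
  shows "b \<otimes>\<^bsub>preproj_algebra V E\<^esub> a \<in> Jh V E n"
proof -
  obtain x where x: "x \<in> carrier (path_algebra V E)" "lowvan n x" "a = pp_class V E x"
    using a by (auto simp: Jh_def)
  obtain y where y: "y \<in> carrier (path_algebra V E)" "b = pp_class V E y"
    using b by (auto simp: L_carrier[OF sg])
  have "b \<otimes>\<^bsub>preproj_algebra V E\<^esub> a = pp_class V E (y \<otimes>\<^bsub>path_algebra V E\<^esub> x)"
    using ring_hom_mult[OF pi_hom[OF sg] y(1) x(1)] x y by simp
  moreover have "y \<otimes>\<^bsub>path_algebra V E\<^esub> x \<in> {x \<in> carrier (path_algebra V E). lowvan n x}"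
    using x y by (simp add: pa_mult_closed lowvan_mult_right)
  ultimately show ?thesis by (simp add: Jh_def)
qed

lemma Jh_mult_r:
  assumes a: "a \<in> Jh V E n" and b: "b \<in> carrier (preproj_algebra V E :: (nat list \<Rightarrow> 'k::field) set ring)"
  shows "a \<otimes>\<^bsub>preproj_algebra V E\<^esub> b \<in> Jh V E n"
proof -
  obtain x where x: "x \<in> carrier (path_algebra V E)" "lowvan n x" "a = pp_class V E x"
    using a by (auto simp: Jh_def)
  obtain y where y: "y \<in> carrier (path_algebra V E)" "b = pp_class V E y"
    using b by (auto simp: L_carrier[OF sg])
  have "a \<otimes>\<^bsub>preproj_algebra V E\<^esub> b = pp_class V E (x \<otimes>\<^bsub>path_algebra V E\<^esub> y)"
    using ring_hom_mult[OF pi_hom[OF sg] x(1) y(1)] x y by simp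
  moreover have "x \<otimes>\<^bsub>path_algebra V E\<^esub> y \<in> {x \<in> carrier (path_algebra V E). lowvan n x}"
    using x y by (simp add: pa_mult_closed lowvan_mult_left)
  ultimately show ?thesis by (simp add: Jh_def)
qed

lemma Jh_add:
  assumes a: "a \<in> Jh V E n" and b: "b \<in> (Jh V E n :: (nat list \<Rightarrow> 'k::field) set set)"
  shows "a \<oplus>\<^bsub>preproj_algebra V E\<^esub> b \<in> Jh V E n"
proof -
  obtain x where x: "x \<in> carrier (path_algebra V E)" "lowvan n x" "a = pp_class V E x"
    using a by (auto simp: Jh_def)
  obtain y where y: "y \<in> carrier (path_algebra V E)" "lowvan n y" "b = pp_class V E y"
    using b by (auto simp: Jh_def)
  have "a \<oplus>\<^bsub>preproj_algebra V E\<^esub> b = pp_class V E (x \<oplus>\<^bsub>path_algebra V E\<^esub> y)"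
    using ring_hom_add[OF pi_hom[OF sg] x(1) y(1)] x y by simp
  moreover have "x \<oplus>\<^bsub>path_algebra V E\<^esub> y \<in> {x \<in> carrier (path_algebra V E). lowvan n x}"
    using x y by (simp add: pa_add_closed lowvan_add)
  ultimately show ?thesis by (simp add: Jh_def)
qed

lemma Jh_12:
  assumes a: "a \<in> Jh V E 1" and b: "b \<in> (Jh V E 1 :: (nat list \<Rightarrow> 'k::field) set set)"
  shows "a \<otimes>\<^bsub>preproj_algebra V E\<^esub> b \<in> Jh V E 2"
proof -
  obtain x where x: "x \<in> carrier (path_algebra V E)" "lowvan 1 x" "a = pp_class V E x"
    using a by (auto simp: Jh_def)
  obtain y where y: "y \<in> carrier (path_algebra V E)" "lowvan 1 y" "b = pp_class V E y"
    using b by (auto simp: Jh_def)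
  have "a \<otimes>\<^bsub>preproj_algebra V E\<^esub> b = pp_class V E (x \<otimes>\<^bsub>path_algebra V E\<^esub> y)"
    using ring_hom_mult[OF pi_hom[OF sg] x(1) y(1)] x y by simp
  moreover have "x \<otimes>\<^bsub>path_algebra V E\<^esub> y \<in> {x \<in> carrier (path_algebra V E). lowvan 2 x}"
    using x y by (simp add: pa_mult_closed lowvan_mult_12)
  ultimately show ?thesis by (simp add: Jh_def)
qed

lemma Jh_mem2:
  assumes x: "x \<in> carrier (path_algebra V E :: (nat list \<Rightarrow> 'k::field) ring)"
    and "pp_class V E x \<in> Jh V E 2"
  shows "lowvan 2 x"
  using assms mem2[OF sg x] by (auto simp: Jh_def)

lemma sandwich:
  assumes y: "y \<in> carrier (path_algebra V E :: (nat list \<Rightarrow> 'k::field) ring)" and k: "k \<in> V" and l: "l \<in> V"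
  shows "mult (path_algebra V E) (mult (path_algebra V E) (delta [k]) y) (delta [l]) =
         (\<lambda>r. if hd r = k \<and> last r = l then y r else 0)"
    and "mult (path_algebra V E) (mult (path_algebra V E) (delta [k]) y) (delta [l]) \<in> carrier (path_algebra V E)"
proof -
  have dk: "(delta [k] :: nat list \<Rightarrow> 'k) \<in> carrier (path_algebra V E)"
    using k by (intro delta_carrier) (simp add: valid_path_def)
  have dl: "(delta [l] :: nat list \<Rightarrow> 'k) \<in> carrier (path_algebra V E)"
    using l by (intro delta_carrier) (simp add: valid_path_def)
  have c: "mult (path_algebra V E) (delta [k]) y \<in> carrier (path_algebra V E)"
    using dk y by (rule pa_mult_closed)
  show "mult (path_algebra V E) (mult (path_algebra V E) (delta [k]) y) (delta [l]) =
         (\<lambda>r. if hd r = k \<and> last r = l then y r else 0)"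
    using delta_right[OF c, of l] delta_left[OF y, of k] by auto
  show "mult (path_algebra V E) (mult (path_algebra V E) (delta [k]) y) (delta [l]) \<in> carrier (path_algebra V E)"
    using c dl by (rule pa_mult_closed)
qed

lemma offdiag:
  assumes k: "k \<in> V" and l: "l \<in> V" and kl: "k \<noteq> l"
    and w: "w \<in> carrier (preproj_algebra V E :: (nat list \<Rightarrow> 'k::field) set ring)"
  shows "pp_class V E (triv_path k) \<otimes>\<^bsub>preproj_algebra V E\<^esub> w \<otimes>\<^bsub>preproj_algebra V E\<^esub> pp_class V E (triv_path l)
     \<in> Jh V E 1"
proof -
  obtain y where y: "y \<in> carrier (path_algebra V E)" "w = pp_class V E y"
    using w by (auto simp: L_carrier[OF sg])
  have dk: "(delta [k] :: nat list \<Rightarrow> 'k) \<in> carrier (path_algebra V E)"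
    using k by (intro delta_carrier) (simp add: valid_path_def)
  have dl: "(delta [l] :: nat list \<Rightarrow> 'k) \<in> carrier (path_algebra V E)"
    using l by (intro delta_carrier) (simp add: valid_path_def)
  have c: "mult (path_algebra V E) (delta [k]) y \<in> carrier (path_algebra V E)"
    using dk y(1) by (rule pa_mult_closed)
  have eq: "pp_class V E (triv_path k) \<otimes>\<^bsub>preproj_algebra V E\<^esub> w \<otimes>\<^bsub>preproj_algebra V E\<^esub> pp_class V E (triv_path l)
     = pp_class V E (mult (path_algebra V E) (mult (path_algebra V E) (delta [k]) y) (delta [l]))"
    using ring_hom_mult[OF pi_hom[OF sg] dk y(1)] ring_hom_mult[OF pi_hom[OF sg] c dl] y
    by (simp add: triv_delta)
  have "lowvan 1 (mult (path_algebra V E) (mult (path_algebra V E) (delta [k]) y) (delta [l]))"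
    unfolding sandwich(1)[OF y(1) k l] lowvan_def
  proof (intro allI impI)
    fix r :: "nat list" assume r: "length r \<le> 1"
    show "(if hd r = k \<and> last r = l then y r else 0) = 0"
    proof (cases r)
      case Nil then show ?thesis using y(1) by (auto simp: pa_carrier valid_path_def)
    next
      case (Cons z zs) then show ?thesis using r kl by auto
    qed
  qed
  then show ?thesis using eq sandwich(2)[OF y(1) k l] by (auto simp: Jh_def)
qed

end


lemma (in monoid) conj3:
  assumes u: "u \<in> Units G" and c: "a \<in> carrier G" "X \<in> carrier G" "b \<in> carrier G"
  shows "(u \<otimes> a \<otimes> inv u) \<otimes> X \<otimes> (u \<otimes> b \<otimes> inv u) = u \<otimes> (a \<otimes> (inv u \<otimes> X \<otimes> u) \<otimes> b) \<otimes> inv u"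
proof -
  have uc: "u \<in> carrier G" "inv u \<in> carrier G" using u by auto
  show ?thesis using uc c by (simp add: m_assoc)
qed

lemma (in monoid) unconj:
  assumes u: "u \<in> Units G" and m: "m \<in> carrier G"
  shows "inv u \<otimes> (u \<otimes> m \<otimes> inv u) \<otimes> u = m"
proof -
  have uc: "u \<in> carrier G" "inv u \<in> carrier G" using u by auto
  have "inv u \<otimes> (u \<otimes> m \<otimes> inv u) \<otimes> u = (inv u \<otimes> u) \<otimes> m \<otimes> (inv u \<otimes> u)"
    using uc m by (simp add: m_assoc)
  also have "\<dots> = m" using u m by simp
  finally show ?thesis .
qed

context
  fixes V :: "nat set" and E :: "nat \<Rightarrow> nat \<Rightarrow> bool"
    and \<phi> :: "(nat list \<Rightarrow> 'k::field) set \<Rightarrow> (nat list \<Rightarrow> 'k) set"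
    and \<rho> :: "nat \<Rightarrow> nat" and u :: "(nat list \<Rightarrow> 'k) set"
  assumes sg: "simple_graph V E"
    and phi: "\<phi> \<in> preproj_aut V E"
    and rho: "bij_betw \<rho> V V"
    and u: "u \<in> Units (preproj_algebra V E)"
    and cj: "\<forall>i\<in>V. \<phi> (pp_class V E (triv_path i)) =
           u \<otimes>\<^bsub>preproj_algebra V E\<^esub> pp_class V E (triv_path (\<rho> i))
             \<otimes>\<^bsub>preproj_algebra V E\<^esub> inv\<^bsub>preproj_algebra V E\<^esub> u"
begin

lemma phom: "\<phi> \<in> ring_hom (preproj_algebra V E) (preproj_algebra V E)"
  using phi by (simp add: preproj_aut_def ring_iso_def)

lemma pbij: "bij_betw \<phi> (carrier (preproj_algebra V E)) (carrier (preproj_algebra V E))"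
  using phi by (simp add: preproj_aut_def ring_iso_def)

lemma pscal: "\<phi> (pp_class V E (pa_scalar V E c)) = pp_class V E (pa_scalar V E c)"
  using phi by (simp add: preproj_aut_def)

lemma Lm: "monoid (preproj_algebra V E)"
  using ringE(2)[OF L_ring[OF sg]] .

lemma e_carr: "i \<in> V \<Longrightarrow> pp_class V E (triv_path i) \<in> carrier (preproj_algebra V E)"
  using ring_hom_closed[OF pi_hom[OF sg] delta_carrier[of V E "[i]"]]
  by (simp add: triv_delta valid_path_def)

lemma uc: "u \<in> carrier (preproj_algebra V E)" "inv\<^bsub>preproj_algebra V E\<^esub> u \<in> carrier (preproj_algebra V E)"
  using u monoid.Units_closed[OF Lm] monoid.Units_inv_closed[OF Lm] by auto

lemma conj_Jh:
  assumes m: "m \<in> carrier (preproj_algebra V E)" and j: "m \<in> Jh V E n"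
  shows "u \<otimes>\<^bsub>preproj_algebra V E\<^esub> m \<otimes>\<^bsub>preproj_algebra V E\<^esub> inv\<^bsub>preproj_algebra V E\<^esub> u \<in> Jh V E n"
  using Jh_mult_r[OF sg Jh_mult_l[OF sg j uc(1)] uc(2)] .

lemma unconj_Jh:
  assumes m: "m \<in> carrier (preproj_algebra V E)"
    and j: "u \<otimes>\<^bsub>preproj_algebra V E\<^esub> m \<otimes>\<^bsub>preproj_algebra V E\<^esub> inv\<^bsub>preproj_algebra V E\<^esub> u \<in> Jh V E n"
  shows "m \<in> Jh V E n"
  using Jh_mult_r[OF sg Jh_mult_l[OF sg j uc(2)] uc(1)] monoid.unconj[OF Lm u m] by simp

lemma phi3:
  assumes "x \<in> carrier (preproj_algebra V E)" "y \<in> carrier (preproj_algebra V E)" "z \<in> carrier (preproj_algebra V E)"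
  shows "\<phi> (x \<otimes>\<^bsub>preproj_algebra V E\<^esub> y \<otimes>\<^bsub>preproj_algebra V E\<^esub> z) =
     \<phi> x \<otimes>\<^bsub>preproj_algebra V E\<^esub> \<phi> y \<otimes>\<^bsub>preproj_algebra V E\<^esub> \<phi> z"
proof -
  have "x \<otimes>\<^bsub>preproj_algebra V E\<^esub> y \<in> carrier (preproj_algebra V E)"
    using assms monoid.m_closed[OF Lm] by blast
  then show ?thesis using assms ring_hom_mult[OF phom] by simp
qed

lemma arrow:
  assumes q: "valid_path V E q" "length q = 2"
  shows "\<phi> (pp_class V E (delta q)) \<in> Jh V E 1"
proof -
  obtain a b where ab: "q = [a, b]" using q(2)
    by (metis One_nat_def Suc_1 length_0_conv length_Suc_conv)
  have abv: "a \<in> V" "b \<in> V" "E a b" using q(1) ab by (auto simp: valid_path_def)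
  then have anb: "a \<noteq> b" using sg by (auto simp: simple_graph_def)
  then have ranb: "\<rho> a \<noteq> \<rho> b" using rho abv by (metis bij_betw_inv_into_left)
  have rv: "\<rho> a \<in> V" "\<rho> b \<in> V" using rho abv by (auto simp: bij_betw_def)
  have dq: "(delta q :: nat list \<Rightarrow> 'k) \<in> carrier (path_algebra V E)" using q(1) by (rule delta_carrier)
  have da: "(delta [a] :: nat list \<Rightarrow> 'k) \<in> carrier (path_algebra V E)"
    using abv by (intro delta_carrier) (simp add: valid_path_def)
  have db: "(delta [b] :: nat list \<Rightarrow> 'k) \<in> carrier (path_algebra V E)"
    using abv by (intro delta_carrier) (simp add: valid_path_def)
  have c1: "mult (path_algebra V E) (delta [a]) (delta q) \<in> (carrier (path_algebra V E) :: (nat list \<Rightarrow> 'k) set)"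
    using da dq by (rule pa_mult_closed)
  have "mult (path_algebra V E) (mult (path_algebra V E) (delta [a]) (delta q)) (delta [b]) = (delta q :: nat list \<Rightarrow> 'k)"
    unfolding sandwich(1)[OF sg dq abv(1,2)] by (auto simp: delta_def ab)
  then have "(pp_class V E (delta q) :: (nat list \<Rightarrow> 'k) set) = pp_class V E (triv_path a) \<otimes>\<^bsub>preproj_algebra V E\<^esub> pp_class V E (delta q)
       \<otimes>\<^bsub>preproj_algebra V E\<^esub> pp_class V E (triv_path b)"
    using ring_hom_mult[OF pi_hom[OF sg] da dq] ring_hom_mult[OF pi_hom[OF sg] c1 db]
    by (simp add: triv_delta)
  then have "\<phi> (pp_class V E (delta q)) = \<phi> (pp_class V E (triv_path a)) \<otimes>\<^bsub>preproj_algebra V E\<^esub> \<phi> (pp_class V E (delta q))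
       \<otimes>\<^bsub>preproj_algebra V E\<^esub> \<phi> (pp_class V E (triv_path b))"
    using phi3[OF e_carr[OF abv(1)] ring_hom_closed[OF pi_hom[OF sg] dq] e_carr[OF abv(2)]] by simp
  also have "\<dots> = u \<otimes>\<^bsub>preproj_algebra V E\<^esub> (pp_class V E (triv_path (\<rho> a)) \<otimes>\<^bsub>preproj_algebra V E\<^esub>
      (inv\<^bsub>preproj_algebra V E\<^esub> u \<otimes>\<^bsub>preproj_algebra V E\<^esub> \<phi> (pp_class V E (delta q)) \<otimes>\<^bsub>preproj_algebra V E\<^esub> u)
      \<otimes>\<^bsub>preproj_algebra V E\<^esub> pp_class V E (triv_path (\<rho> b))) \<otimes>\<^bsub>preproj_algebra V E\<^esub> inv\<^bsub>preproj_algebra V E\<^esub> u"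
    using cj abv monoid.conj3[OF Lm u e_carr[OF rv(1)] ring_hom_closed[OF phom ring_hom_closed[OF pi_hom[OF sg] dq]] e_carr[OF rv(2)]]
    by simp
  finally have fin: "\<phi> (pp_class V E (delta q)) = u \<otimes>\<^bsub>preproj_algebra V E\<^esub> (pp_class V E (triv_path (\<rho> a)) \<otimes>\<^bsub>preproj_algebra V E\<^esub>
      (inv\<^bsub>preproj_algebra V E\<^esub> u \<otimes>\<^bsub>preproj_algebra V E\<^esub> \<phi> (pp_class V E (delta q)) \<otimes>\<^bsub>preproj_algebra V E\<^esub> u)
      \<otimes>\<^bsub>preproj_algebra V E\<^esub> pp_class V E (triv_path (\<rho> b))) \<otimes>\<^bsub>preproj_algebra V E\<^esub> inv\<^bsub>preproj_algebra V E\<^esub> u" .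
  have pq: "\<phi> (pp_class V E (delta q)) \<in> carrier (preproj_algebra V E)"
    by (rule ring_hom_closed[OF phom ring_hom_closed[OF pi_hom[OF sg] dq]])
  have wc: "inv\<^bsub>preproj_algebra V E\<^esub> u \<otimes>\<^bsub>preproj_algebra V E\<^esub> \<phi> (pp_class V E (delta q)) \<otimes>\<^bsub>preproj_algebra V E\<^esub> u
     \<in> carrier (preproj_algebra V E)"
    using pq uc monoid.m_closed[OF Lm] by blast
  have M: "pp_class V E (triv_path (\<rho> a)) \<otimes>\<^bsub>preproj_algebra V E\<^esub>
      (inv\<^bsub>preproj_algebra V E\<^esub> u \<otimes>\<^bsub>preproj_algebra V E\<^esub> \<phi> (pp_class V E (delta q)) \<otimes>\<^bsub>preproj_algebra V E\<^esub> u)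
      \<otimes>\<^bsub>preproj_algebra V E\<^esub> pp_class V E (triv_path (\<rho> b)) \<in> Jh V E 1"
    by (rule offdiag[OF sg rv ranb wc])
  have Mc: "pp_class V E (triv_path (\<rho> a)) \<otimes>\<^bsub>preproj_algebra V E\<^esub>
      (inv\<^bsub>preproj_algebra V E\<^esub> u \<otimes>\<^bsub>preproj_algebra V E\<^esub> \<phi> (pp_class V E (delta q)) \<otimes>\<^bsub>preproj_algebra V E\<^esub> u)
      \<otimes>\<^bsub>preproj_algebra V E\<^esub> pp_class V E (triv_path (\<rho> b)) \<in> carrier (preproj_algebra V E)"
    using M Jh_carrier[OF sg] by blast
  from conj_Jh[OF Mc M] show ?thesis by (subst fin, assumption)
qed


abbreviation dl :: "nat list \<Rightarrow> nat list \<Rightarrow> 'k" where "dl \<equiv> delta"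

lemma delta_split:
  assumes p: "valid_path V E p" "1 < length p"
  shows "(dl p :: nat list \<Rightarrow> 'k) = mult (path_algebra V E) (dl (take 2 p)) (dl (drop 1 p))"
proof -
  obtain x y rest where pe: "p = x # y # rest" using p(2)
    by (metis Suc_le_length_iff Suc_lessD One_nat_def Suc_le_eq)
  have "mult (path_algebra V E) (dl (take 2 p)) (dl (drop 1 p)) = dl p"
    using delta_mult[of V E "take 2 p" "drop 1 p"] p pe by simp
  then show ?thesis by simp
qed

lemma vp_arrow: "valid_path V E p \<Longrightarrow> 1 < length p \<Longrightarrow> valid_path V E (take 2 p) \<and> length (take 2 p) = 2"
  using vp_take[of V E p 2] by auto

lemma phi_delta:
  assumes p: "valid_path V E p" "2 < length p"
  shows "\<phi> (pp_class V E (dl p)) \<in> Jh V E 2"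
proof -
  define q where "q = drop 1 p"
  have vq: "valid_path V E q" "1 < length q" using p vp_drop[of V E p 1] by (auto simp: q_def)
  have vg: "valid_path V E (drop 1 q)" using vq vp_drop[of V E q 1] by auto
  have e1: "(dl p :: nat list \<Rightarrow> 'k) = mult (path_algebra V E) (dl (take 2 p)) (dl q)"
    using delta_split[OF p(1)] p(2) by (simp add: q_def)
  have e2: "(dl q :: nat list \<Rightarrow> 'k) = mult (path_algebra V E) (dl (take 2 q)) (dl (drop 1 q))"
    using delta_split[OF vq] .
  have va: "valid_path V E (take 2 p)" "length (take 2 p) = 2" using vp_arrow[OF p(1)] p(2) by auto
  have vb: "valid_path V E (take 2 q)" "length (take 2 q) = 2" using vp_arrow[OF vq] by auto
  have da: "(dl (take 2 p) :: nat list \<Rightarrow> 'k) \<in> carrier (path_algebra V E)" using va(1) by (rule delta_carrier)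
  have db: "(dl (take 2 q) :: nat list \<Rightarrow> 'k) \<in> carrier (path_algebra V E)" using vb(1) by (rule delta_carrier)
  have dg: "(dl (drop 1 q) :: nat list \<Rightarrow> 'k) \<in> carrier (path_algebra V E)" using vg by (rule delta_carrier)
  have dq: "(dl q :: nat list \<Rightarrow> 'k) \<in> carrier (path_algebra V E)" using vq(1) by (rule delta_carrier)
  have A: "\<phi> (pp_class V E (dl (take 2 p))) \<in> Jh V E 1" using arrow va by blast
  have B: "\<phi> (pp_class V E (dl (take 2 q))) \<in> Jh V E 1" using arrow vb by blast
  have Gc: "\<phi> (pp_class V E (dl (drop 1 q))) \<in> carrier (preproj_algebra V E)"
    by (rule ring_hom_closed[OF phom ring_hom_closed[OF pi_hom[OF sg] dg]])
  have ca: "pp_class V E (dl (take 2 p)) \<in> carrier (preproj_algebra V E)"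
    by (rule ring_hom_closed[OF pi_hom[OF sg] da])
  have cb: "pp_class V E (dl (take 2 q)) \<in> carrier (preproj_algebra V E)"
    by (rule ring_hom_closed[OF pi_hom[OF sg] db])
  have cg: "pp_class V E (dl (drop 1 q)) \<in> carrier (preproj_algebra V E)"
    by (rule ring_hom_closed[OF pi_hom[OF sg] dg])
  have "pp_class V E (dl p) = pp_class V E (dl (take 2 p)) \<otimes>\<^bsub>preproj_algebra V E\<^esub>
         pp_class V E (dl (take 2 q)) \<otimes>\<^bsub>preproj_algebra V E\<^esub> pp_class V E (dl (drop 1 q))"
  proof -
    have "pp_class V E (dl p) = pp_class V E (dl (take 2 p)) \<otimes>\<^bsub>preproj_algebra V E\<^esub>
         (pp_class V E (dl (take 2 q)) \<otimes>\<^bsub>preproj_algebra V E\<^esub> pp_class V E (dl (drop 1 q)))"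
      using ring_hom_mult[OF pi_hom[OF sg] da dq] ring_hom_mult[OF pi_hom[OF sg] db dg] e1 e2 by simp
    then show ?thesis using monoid.m_assoc[OF Lm ca cb cg] by simp
  qed
  then have "\<phi> (pp_class V E (dl p)) = \<phi> (pp_class V E (dl (take 2 p))) \<otimes>\<^bsub>preproj_algebra V E\<^esub>
         \<phi> (pp_class V E (dl (take 2 q))) \<otimes>\<^bsub>preproj_algebra V E\<^esub> \<phi> (pp_class V E (dl (drop 1 q)))"
    using phi3[OF ca cb cg] by simp
  then show ?thesis using Jh_mult_r[OF sg Jh_12[OF sg A B] Gc] by simp
qed

lemma phiJ2_aux:
  assumes "finite S"
  shows "\<forall>x. x \<in> carrier (path_algebra V E) \<and> lowvan 2 x \<and> {p. x p \<noteq> 0} \<subseteq> S \<longrightarrow>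
     \<phi> (pp_class V E x) \<in> Jh V E 2"
  using assms
proof (induction S rule: finite_induct)
  case empty
  show ?case
  proof (intro allI impI)
    fix x :: "nat list \<Rightarrow> 'k" assume h: "x \<in> carrier (path_algebra V E) \<and> lowvan 2 x \<and> {p. x p \<noteq> 0} \<subseteq> {}"
    then have x0: "x = \<zero>\<^bsub>path_algebra V E\<^esub>" by (auto simp: pa_zero)
    have "pp_class V E x = \<zero>\<^bsub>preproj_algebra V E\<^esub>"
      unfolding x0 by (rule ring_hom_zero[OF pi_hom[OF sg] pa_ring[OF finV[OF sg]] L_ring[OF sg]])
    then have "\<phi> (pp_class V E x) = pp_class V E x"
      using ring_hom_zero[OF phom L_ring[OF sg] L_ring[OF sg]] by simp
    then show "\<phi> (pp_class V E x) \<in> Jh V E 2" using h by (auto simp: Jh_def)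
  qed
next
  case (insert p S)
  show ?case
  proof (intro allI impI)
    fix x :: "nat list \<Rightarrow> 'k" assume h: "x \<in> carrier (path_algebra V E) \<and> lowvan 2 x \<and> {p. x p \<noteq> 0} \<subseteq> insert p S"
    define x' where "x' = x(p := 0)"
    have x'c: "x' \<in> carrier (path_algebra V E)"
    proof -
      have "{r. x' r \<noteq> 0} \<subseteq> {r. x r \<noteq> 0}" by (auto simp: x'_def)
      then show ?thesis using h by (auto simp: pa_carrier x'_def intro: finite_subset)
    qed
    have x'l: "lowvan 2 x'" using h by (auto simp: lowvan_def x'_def)
    have x's: "{r. x' r \<noteq> 0} \<subseteq> S" using h by (auto simp: x'_def)
    have IH: "\<phi> (pp_class V E x') \<in> Jh V E 2" using insert.IH x'c x'l x's by blast
    show "\<phi> (pp_class V E x) \<in> Jh V E 2"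
    proof (cases "x p = 0")
      case True
      then have "x = x'" by (auto simp: x'_def)
      then show ?thesis using IH by simp
    next
      case False
      then have vp: "valid_path V E p" using h by (auto simp: pa_carrier)
      have lp: "2 < length p" using False h by (auto simp: lowvan_def not_less[symmetric])
      have dp: "(dl p :: nat list \<Rightarrow> 'k) \<in> carrier (path_algebra V E)" using vp by (rule delta_carrier)
      have sc: "(pa_scalar V E (x p) :: nat list \<Rightarrow> 'k) \<in> carrier (path_algebra V E)"
        by (rule scalar_carrier[OF finV[OF sg]])
      have sdc: "mult (path_algebra V E) (pa_scalar V E (x p)) (dl p) \<in> carrier (path_algebra V E)"
        using sc dp by (rule pa_mult_closed)
      have xe: "x = add (path_algebra V E) (mult (path_algebra V E) (pa_scalar V E (x p)) (dl p)) x'"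
        unfolding scalar_left[OF dp] by (rule ext) (auto simp: pa_add x'_def delta_def)
      have "pp_class V E x = pp_class V E (pa_scalar V E (x p)) \<otimes>\<^bsub>preproj_algebra V E\<^esub> pp_class V E (dl p)
             \<oplus>\<^bsub>preproj_algebra V E\<^esub> pp_class V E x'"
        using ring_hom_add[OF pi_hom[OF sg] sdc x'c] ring_hom_mult[OF pi_hom[OF sg] sc dp] xe by simp
      moreover have csc: "pp_class V E (pa_scalar V E (x p)) \<in> carrier (preproj_algebra V E)"
        by (rule ring_hom_closed[OF pi_hom[OF sg] sc])
      moreover have cdp: "pp_class V E (dl p) \<in> carrier (preproj_algebra V E)"
        by (rule ring_hom_closed[OF pi_hom[OF sg] dp])
      moreover have cx': "pp_class V E x' \<in> carrier (preproj_algebra V E)"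
        by (rule ring_hom_closed[OF pi_hom[OF sg] x'c])
      ultimately have "\<phi> (pp_class V E x) = pp_class V E (pa_scalar V E (x p)) \<otimes>\<^bsub>preproj_algebra V E\<^esub> \<phi> (pp_class V E (dl p))
             \<oplus>\<^bsub>preproj_algebra V E\<^esub> \<phi> (pp_class V E x')"
      proof -
        assume e: "pp_class V E x = pp_class V E (pa_scalar V E (x p)) \<otimes>\<^bsub>preproj_algebra V E\<^esub> pp_class V E (dl p)
             \<oplus>\<^bsub>preproj_algebra V E\<^esub> pp_class V E x'"
          and csc: "pp_class V E (pa_scalar V E (x p)) \<in> carrier (preproj_algebra V E)"
          and cdp: "pp_class V E (dl p) \<in> carrier (preproj_algebra V E)"
          and cx': "pp_class V E x' \<in> carrier (preproj_algebra V E)"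
        have m: "pp_class V E (pa_scalar V E (x p)) \<otimes>\<^bsub>preproj_algebra V E\<^esub> pp_class V E (dl p) \<in> carrier (preproj_algebra V E)"
          using monoid.m_closed[OF Lm csc cdp] .
        show ?thesis unfolding e ring_hom_add[OF phom m cx'] ring_hom_mult[OF phom csc cdp] pscal ..
      qed
      then show ?thesis
        using Jh_add[OF sg Jh_mult_l[OF sg phi_delta[OF vp lp] csc] IH] by simp
    qed
  qed
qed

lemma phiJ2:
  assumes "x \<in> carrier (path_algebra V E)" "lowvan 2 x"
  shows "\<phi> (pp_class V E x) \<in> Jh V E 2"
  using phiJ2_aux[of "{p. x p \<noteq> 0}"] assms by (auto simp: pa_carrier)


lemma back_edge:
  assumes i: "i \<in> V" and j: "j \<in> V" and e: "E (\<rho> i) (\<rho> j)"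
  shows "E i j"
proof (rule ccontr)
  assume ne: "\<not> E i j"
  have ri: "\<rho> i \<in> V" "\<rho> j \<in> V" using rho i j by (auto simp: bij_betw_def)
  have rij: "\<rho> i \<noteq> \<rho> j" using e sg by (auto simp: simple_graph_def)
  then have ij: "i \<noteq> j" by auto
  have vb: "valid_path V E [\<rho> i, \<rho> j]" using e ri by (auto simp: valid_path_def less_Suc_eq)
  have db: "dl [\<rho> i, \<rho> j] \<in> carrier (path_algebra V E)" using vb by (rule delta_carrier)
  define b where "b = pp_class V E (dl [\<rho> i, \<rho> j])"
  have bc: "b \<in> carrier (preproj_algebra V E)" unfolding b_def by (rule ring_hom_closed[OF pi_hom[OF sg] db])
  define t where "t = u \<otimes>\<^bsub>preproj_algebra V E\<^esub> b \<otimes>\<^bsub>preproj_algebra V E\<^esub> inv\<^bsub>preproj_algebra V E\<^esub> u"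
  have tc: "t \<in> carrier (preproj_algebra V E)" unfolding t_def using bc uc monoid.m_closed[OF Lm] by blast
  obtain c where c: "c \<in> carrier (preproj_algebra V E)" "\<phi> c = t"
    using pbij tc by (metis bij_betw_imp_surj_on imageE)
  obtain x where x: "x \<in> carrier (path_algebra V E)" "c = pp_class V E x"
    using c(1) by (auto simp: L_carrier[OF sg])
  define y where "y = mult (path_algebra V E) (mult (path_algebra V E) (dl [i]) x) (dl [j])"
  have yf: "y = (\<lambda>r. if hd r = i \<and> last r = j then x r else 0)" "y \<in> carrier (path_algebra V E)"
    unfolding y_def using sandwich[OF sg x(1) i j] by auto
  have yl: "lowvan 2 y"
    unfolding lowvan_def
  proof (intro allI impI)
    fix r :: "nat list" assume r: "length r \<le> 2"
    show "y r = 0"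
    proof (rule ccontr)
      assume nz: "y r \<noteq> 0"
      then have hx: "hd r = i" "last r = j" "x r \<noteq> 0" using yf(1) by (auto split: if_splits)
      then have vr: "valid_path V E r" using x(1) by (auto simp: pa_carrier)
      show False
      proof (cases r)
        case Nil then show False using vr by (simp add: valid_path_def)
      next
        case (Cons z zs)
        show False
        proof (cases zs)
          case Nil then show False using Cons hx ij by simp
        next
          case (Cons w ws)
          then have "ws = []" using r \<open>r = z # zs\<close> by simp
          then show False using vr Cons \<open>r = z # zs\<close> hx ne by (auto simp: valid_path_def)
        qed
      qed
    qed
  qed
  have PJ: "\<phi> (pp_class V E y) \<in> Jh V E 2" by (rule phiJ2[OF yf(2) yl])
  have di: "dl [i] \<in> carrier (path_algebra V E)" using i by (intro delta_carrier) (simp add: valid_path_def)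
  have dj: "dl [j] \<in> carrier (path_algebra V E)" using j by (intro delta_carrier) (simp add: valid_path_def)
  have c1: "mult (path_algebra V E) (dl [i]) x \<in> carrier (path_algebra V E)" using di x(1) by (rule pa_mult_closed)
  have py: "pp_class V E y = pp_class V E (triv_path i) \<otimes>\<^bsub>preproj_algebra V E\<^esub> c \<otimes>\<^bsub>preproj_algebra V E\<^esub> pp_class V E (triv_path j)"
    unfolding y_def using ring_hom_mult[OF pi_hom[OF sg] di x(1)] ring_hom_mult[OF pi_hom[OF sg] c1 dj] x(2)
    by (simp add: triv_delta)
  have "\<phi> (pp_class V E y) = \<phi> (pp_class V E (triv_path i)) \<otimes>\<^bsub>preproj_algebra V E\<^esub> t \<otimes>\<^bsub>preproj_algebra V E\<^esub> \<phi> (pp_class V E (triv_path j))"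
    unfolding py using phi3[OF e_carr[OF i] c(1) e_carr[OF j]] c(2) by simp
  also have "\<dots> = u \<otimes>\<^bsub>preproj_algebra V E\<^esub> (pp_class V E (triv_path (\<rho> i)) \<otimes>\<^bsub>preproj_algebra V E\<^esub>
      (inv\<^bsub>preproj_algebra V E\<^esub> u \<otimes>\<^bsub>preproj_algebra V E\<^esub> t \<otimes>\<^bsub>preproj_algebra V E\<^esub> u)
      \<otimes>\<^bsub>preproj_algebra V E\<^esub> pp_class V E (triv_path (\<rho> j))) \<otimes>\<^bsub>preproj_algebra V E\<^esub> inv\<^bsub>preproj_algebra V E\<^esub> u"
    using cj i j monoid.conj3[OF Lm u e_carr[OF ri(1)] tc e_carr[OF ri(2)]] by simp
  also have "inv\<^bsub>preproj_algebra V E\<^esub> u \<otimes>\<^bsub>preproj_algebra V E\<^esub> t \<otimes>\<^bsub>preproj_algebra V E\<^esub> u = b"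
    unfolding t_def by (rule monoid.unconj[OF Lm u bc])
  finally have fin: "\<phi> (pp_class V E y) = u \<otimes>\<^bsub>preproj_algebra V E\<^esub> (pp_class V E (triv_path (\<rho> i)) \<otimes>\<^bsub>preproj_algebra V E\<^esub>
      b \<otimes>\<^bsub>preproj_algebra V E\<^esub> pp_class V E (triv_path (\<rho> j))) \<otimes>\<^bsub>preproj_algebra V E\<^esub> inv\<^bsub>preproj_algebra V E\<^esub> u" .
  have Mc: "pp_class V E (triv_path (\<rho> i)) \<otimes>\<^bsub>preproj_algebra V E\<^esub> b \<otimes>\<^bsub>preproj_algebra V E\<^esub> pp_class V E (triv_path (\<rho> j))
      \<in> carrier (preproj_algebra V E)"
    using e_carr[OF ri(1)] bc e_carr[OF ri(2)] monoid.m_closed[OF Lm] by blast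
  have MJ: "pp_class V E (triv_path (\<rho> i)) \<otimes>\<^bsub>preproj_algebra V E\<^esub> b \<otimes>\<^bsub>preproj_algebra V E\<^esub> pp_class V E (triv_path (\<rho> j))
      \<in> Jh V E 2"
    using unconj_Jh[OF Mc] PJ fin by simp
  have dri: "dl [\<rho> i] \<in> carrier (path_algebra V E)" using ri by (intro delta_carrier) (simp add: valid_path_def)
  have drj: "dl [\<rho> j] \<in> carrier (path_algebra V E)" using ri by (intro delta_carrier) (simp add: valid_path_def)
  define z where "z = mult (path_algebra V E) (mult (path_algebra V E) (dl [\<rho> i]) (dl [\<rho> i, \<rho> j])) (dl [\<rho> j])"
  have zf: "z = (\<lambda>r. if hd r = \<rho> i \<and> last r = \<rho> j then dl [\<rho> i, \<rho> j] r else 0)" "z \<in> carrier (path_algebra V E)"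
    unfolding z_def using sandwich[OF sg db ri] by auto
  have c2: "mult (path_algebra V E) (dl [\<rho> i]) (dl [\<rho> i, \<rho> j]) \<in> carrier (path_algebra V E)" using dri db by (rule pa_mult_closed)
  have pz: "pp_class V E z = pp_class V E (triv_path (\<rho> i)) \<otimes>\<^bsub>preproj_algebra V E\<^esub> b \<otimes>\<^bsub>preproj_algebra V E\<^esub> pp_class V E (triv_path (\<rho> j))"
    unfolding z_def b_def using ring_hom_mult[OF pi_hom[OF sg] dri db] ring_hom_mult[OF pi_hom[OF sg] c2 drj]
    by (simp add: triv_delta)
  have "lowvan 2 z" using Jh_mem2[OF sg zf(2)] MJ pz by simp
  moreover have "z [\<rho> i, \<rho> j] = 1" using zf(1) by (simp add: delta_def)
  ultimately show False by (simp add: lowvan_def)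
qed

end


lemma counting:
  assumes fin: "finite V" and rho: "bij_betw \<rho> V V" and ed: "\<forall>i j. E i j \<longrightarrow> i \<in> V \<and> j \<in> V"
    and bk: "\<forall>i\<in>V. \<forall>j\<in>V. E (\<rho> i) (\<rho> j) \<longrightarrow> E i j"
    and i: "i \<in> V" and j: "j \<in> V" and e: "E i j"
  shows "E (\<rho> i) (\<rho> j)"
proof -
  define Ed where "Ed = {(a, b). E a b}"
  define A where "A = {(a, b). a \<in> V \<and> b \<in> V \<and> E (\<rho> a) (\<rho> b)}"
  have EdV: "Ed \<subseteq> V \<times> V" using ed by (auto simp: Ed_def)
  have fEd: "finite Ed" using EdV fin finite_subset by blast
  have AE: "A \<subseteq> Ed" using bk by (auto simp: A_def Ed_def)
  have injf: "inj_on (map_prod \<rho> \<rho>) A"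
    using rho unfolding A_def bij_betw_def inj_on_def by auto
  have img: "map_prod \<rho> \<rho> ` A = Ed"
  proof
    show "map_prod \<rho> \<rho> ` A \<subseteq> Ed" by (auto simp: A_def Ed_def)
  next
    show "Ed \<subseteq> map_prod \<rho> \<rho> ` A"
    proof
      fix pr assume pr: "pr \<in> Ed"
      obtain a b where ab: "pr = (a, b)" "a \<in> V" "b \<in> V" "E a b" using pr EdV by (auto simp: Ed_def)
      obtain a' where a': "a' \<in> V" "\<rho> a' = a" using rho ab(2) by (metis bij_betw_imp_surj_on imageE)
      obtain b' where b': "b' \<in> V" "\<rho> b' = b" using rho ab(3) by (metis bij_betw_imp_surj_on imageE)
      show "pr \<in> map_prod \<rho> \<rho> ` A"
        using a' b' ab by (auto simp: A_def intro!: image_eqI[where x="(a', b')"])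
    qed
  qed
  have "card A = card Ed" using card_image[OF injf] img by simp
  then have "A = Ed" using card_subset_eq[OF fEd AE] by simp
  then have "(i, j) \<in> A" using e by (simp add: Ed_def)
  then show ?thesis by (simp add: A_def)
qed

theorem lemma4p6:
  fixes V :: "nat set" and E :: "nat \<Rightarrow> nat \<Rightarrow> bool"
    and \<phi> :: "(nat list \<Rightarrow> 'k::field) set \<Rightarrow> (nat list \<Rightarrow> 'k) set"
    and \<rho> :: "nat \<Rightarrow> nat" and u :: "(nat list \<Rightarrow> 'k) set"
  assumes "alg_closed TYPE('k)"
    and "simply_laced_dynkin V E"
    and "\<phi> \<in> preproj_aut V E"
    and "bij_betw \<rho> V V"
    and "u \<in> Units (preproj_algebra V E)"
    and "\<forall>i\<in>V. \<phi> (pp_class V E (triv_path i)) =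
           u \<otimes>\<^bsub>preproj_algebra V E\<^esub> pp_class V E (triv_path (\<rho> i))
             \<otimes>\<^bsub>preproj_algebra V E\<^esub> inv\<^bsub>preproj_algebra V E\<^esub> u"
  shows "graph_aut V E \<rho>"
proof -
  have sg: "simple_graph V E" using assms(2) by (simp add: simply_laced_dynkin_def)
  have bk: "\<forall>i\<in>V. \<forall>j\<in>V. E (\<rho> i) (\<rho> j) \<longrightarrow> E i j"
    using back_edge[OF sg assms(3,4,5,6)] by blast
  have fin: "finite V" and ed: "\<forall>i j. E i j \<longrightarrow> i \<in> V \<and> j \<in> V" using sg by (auto simp: simple_graph_def)
  have "\<forall>i\<in>V. \<forall>j\<in>V. E i j \<longleftrightarrow> E (\<rho> i) (\<rho> j)"
    using bk counting[OF fin assms(4) ed bk] by blast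
  then show ?thesis using assms(4) by (simp add: graph_aut_def)
qed

end
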